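(* Let $X$ be a proper geodesic space with basepoint $x_0$. Suppose $p_n,p\in\partial_M X_{x_0}$ and $p_n\to p$ in the topology of $\partial_M X_{x_0}$. Then there exists a Morse gauge $N$ such that $p_n,p\in\partial_M^N X_{x_0}$ for all $n$ and $p_n\to p$ in the topology of $\partial_M^N X_{x_0}$.
   Context: A Morse gauge is a function $N:[1,\infty)\times[0,\infty)\to[0,\infty)$; a geodesic $\gamma$ is $N$-Morse if every $(\lambda,\epsilon)$-quasi-geodesic with endpoints on $\gamma$ lies in the $N(\lambda,\epsilon)$-neighborhood of $\gamma$. $\partial_M X_{x_0}$ is the set of Morse geodesic rays based at $x_0$ modulo finite Hausdorff distance; $\partial_M^N X_{x_0}$ is the subset of classes containing an $N$-Morse ray based at $x_0$, with the quotient of the compact-open topology on the set of $N$-Morse rays based at $x_0$; Morse gauges are ordered pointwise and $\partial_M X_{x_0}=\varinjlim_N\partial_M^N X_{x_0}$ has the direct limit topology ($U$ open iff $U\cap\partial_M^N X_{x_0}$ is open in $\partial_M^N X_{x_0}$ for all $N$). *)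

theory Defs
  imports "HOL-Analysis.Analysis"
begin

definition proper_space :: "'a::metric_space itself \<Rightarrow> bool" where
  "proper_space _ \<longleftrightarrow> (\<forall>(x::'a) r. compact (cball x r))"

definition geodesic_space :: "'a::metric_space itself \<Rightarrow> bool" where
  "geodesic_space _ \<longleftrightarrow> (\<forall>(x::'a) y. \<exists>g::real \<Rightarrow> 'a. g 0 = x \<and> g (dist x y) = y \<and>
      (\<forall>s\<in>{0..dist x y}. \<forall>t\<in>{0..dist x y}. dist (g s) (g t) = \<bar>s - t\<bar>))"

text \<open>A Morse gauge N : [1,oo) x [0,oo) -> [0,oo), represented as a curried real function;
  its values outside the domain are irrelevant.\<close>
definition morse_gauge :: "(real \<Rightarrow> real \<Rightarrow> real) \<Rightarrow> bool" where
  "morse_gauge N \<longleftrightarrow> (\<forall>l e. l \<ge> 1 \<longrightarrow> e \<ge> 0 \<longrightarrow> N l e \<ge> 0)"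

definition quasi_geodesic :: "real \<Rightarrow> real \<Rightarrow> real \<Rightarrow> real \<Rightarrow> (real \<Rightarrow> 'a::metric_space) \<Rightarrow> bool" where
  "quasi_geodesic l e a b c \<longleftrightarrow> a \<le> b \<and>
     (\<forall>s\<in>{a..b}. \<forall>t\<in>{a..b}. \<bar>s - t\<bar> / l - e \<le> dist (c s) (c t) \<and> dist (c s) (c t) \<le> l * \<bar>s - t\<bar> + e)"

text \<open>Geodesic rays based at x0. Rays are functions on [0,oo); by convention they are
  extended by the constant x0 on the negative reals, so that each ray has a unique representative.\<close>
definition geodesic_ray :: "'a::metric_space \<Rightarrow> (real \<Rightarrow> 'a) \<Rightarrow> bool" where
  "geodesic_ray x0 g \<longleftrightarrow> g 0 = x0 \<and> (\<forall>t<0. g t = x0) \<and>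
     (\<forall>s\<ge>0. \<forall>t\<ge>0. dist (g s) (g t) = \<bar>s - t\<bar>)"

definition N_Morse_ray :: "(real \<Rightarrow> real \<Rightarrow> real) \<Rightarrow> (real \<Rightarrow> 'a::metric_space) \<Rightarrow> bool" where
  "N_Morse_ray N g \<longleftrightarrow> (\<forall>l e a b (c::real \<Rightarrow> 'a). l \<ge> 1 \<longrightarrow> e \<ge> 0 \<longrightarrow> quasi_geodesic l e a b c \<longrightarrow>
       c a \<in> g ` {0..} \<longrightarrow> c b \<in> g ` {0..} \<longrightarrow>
       (\<forall>t\<in>{a..b}. infdist (c t) (g ` {0..}) \<le> N l e))"

definition Morse_ray :: "'a::metric_space \<Rightarrow> (real \<Rightarrow> 'a) \<Rightarrow> bool" where
  "Morse_ray x0 g \<longleftrightarrow> geodesic_ray x0 g \<and> (\<exists>N. morse_gauge N \<and> N_Morse_ray N g)"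

definition NMorse_rays :: "'a::metric_space \<Rightarrow> (real \<Rightarrow> real \<Rightarrow> real) \<Rightarrow> (real \<Rightarrow> 'a) set" where
  "NMorse_rays x0 N = {g. geodesic_ray x0 g \<and> N_Morse_ray N g}"

definition fin_hausdorff :: "(real \<Rightarrow> 'a::metric_space) \<Rightarrow> (real \<Rightarrow> 'a) \<Rightarrow> bool" where
  "fin_hausdorff g h \<longleftrightarrow> (\<exists>C. (\<forall>s\<ge>0. \<exists>t\<ge>0. dist (g s) (h t) \<le> C) \<and> (\<forall>t\<ge>0. \<exists>s\<ge>0. dist (g s) (h t) \<le> C))"

definition morse_class :: "'a::metric_space \<Rightarrow> (real \<Rightarrow> 'a) \<Rightarrow> (real \<Rightarrow> 'a) set" where
  "morse_class x0 g = {h. Morse_ray x0 h \<and> fin_hausdorff g h}"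

definition Morse_boundary :: "'a::metric_space \<Rightarrow> (real \<Rightarrow> 'a) set set" where
  "Morse_boundary x0 = morse_class x0 ` {g. Morse_ray x0 g}"

definition Morse_boundary_N :: "'a::metric_space \<Rightarrow> (real \<Rightarrow> real \<Rightarrow> real) \<Rightarrow> (real \<Rightarrow> 'a) set set" where
  "Morse_boundary_N x0 N = morse_class x0 ` NMorse_rays x0 N"

definition compact_open_on :: "(real \<Rightarrow> 'a::topological_space) set \<Rightarrow> (real \<Rightarrow> 'a) topology" where
  "compact_open_on S = subtopology
     (topology_generated_by {{f. f ` K \<subseteq> U} | K U. compact K \<and> K \<subseteq> {0..} \<and> open U}) S"

definition quotient_topology :: "'a topology \<Rightarrow> ('a \<Rightarrow> 'b) \<Rightarrow> 'b topology" where
  "quotient_topology T q = topology (\<lambda>U. U \<subseteq> q ` topspace T \<and> openin T {x \<in> topspace T. q x \<in> U})"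

definition Morse_boundary_N_top :: "'a::metric_space \<Rightarrow> (real \<Rightarrow> real \<Rightarrow> real) \<Rightarrow> (real \<Rightarrow> 'a) set topology" where
  "Morse_boundary_N_top x0 N = quotient_topology (compact_open_on (NMorse_rays x0 N)) (morse_class x0)"

definition Morse_boundary_top :: "'a::metric_space \<Rightarrow> (real \<Rightarrow> 'a) set topology" where
  "Morse_boundary_top x0 = topology (\<lambda>U. U \<subseteq> Morse_boundary x0 \<and>
     (\<forall>N. morse_gauge N \<longrightarrow> openin (Morse_boundary_N_top x0 N) (U \<inter> Morse_boundary_N x0 N)))"

end

theory Submission
  imports Defs "HOL-Library.Diagonal_Subsequence"
begin


lemma ray_x0: assumes "geodesic_ray x0 g" "t \<ge> 0" shows "dist x0 (g t) = t"
proof -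
  have "g 0 = x0" "dist (g 0) (g t) = \<bar>0 - t\<bar>" using assms unfolding geodesic_ray_def by auto
  then show ?thesis using assms(2) by simp
qed

lemma ray_lip: assumes "geodesic_ray x0 g" shows "dist (g s) (g t) \<le> \<bar>s - t\<bar>"
proof -
  have A: "g 0 = x0" "\<And>t. t < 0 \<Longrightarrow> g t = x0" "\<And>s t. s \<ge> 0 \<Longrightarrow> t \<ge> 0 \<Longrightarrow> dist (g s) (g t) = \<bar>s - t\<bar>"
    using assms unfolding geodesic_ray_def by auto
  consider "s \<ge> 0" "t \<ge> 0" | "s < 0" "t < 0" | "s \<ge> 0" "t < 0" | "s < 0" "t \<ge> 0" by linarith
  then show ?thesis
  proof cases
    case 3 then show ?thesis using A(2)[of t] A(3)[of s 0] A(1) by auto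
  next
    case 4 then show ?thesis using A(2)[of s] A(3)[of 0 t] A(1) by auto
  qed (use A in auto)
qed

lemma lip_cont:
  assumes "\<And>s t. dist (f s) (f t) \<le> \<bar>s - t\<bar>" shows "continuous_on S (f :: real \<Rightarrow> 'a::metric_space)"
proof (rule continuous_on_iff[THEN iffD2], intro ballI allI impI)
  fix x and e :: real assume e: "0 < e"
  show "\<exists>d>0. \<forall>x'\<in>S. dist x' x < d \<longrightarrow> dist (f x') (f x) < e"
  proof (intro exI[of _ e] conjI ballI impI)
    fix x' assume "dist x' x < e"
    moreover have "dist (f x') (f x) \<le> \<bar>x' - x\<bar>" by (rule assms)
    ultimately show "dist (f x') (f x) < e" by (simp add: dist_real_def)
  qed (rule e)
qed

lemma ray_cont: "geodesic_ray x0 g \<Longrightarrow> continuous_on S g"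
  by (rule lip_cont) (rule ray_lip)

lemma infdist_lessE:
  assumes "A \<noteq> {}" "infdist x A < d" obtains a where "a \<in> A" "dist x a < d"
  using assms by (auto simp: infdist_notempty cINF_less_iff)

lemma infdist_transfer:
  assumes "A \<noteq> {}" "\<And>a. a \<in> A \<Longrightarrow> \<exists>b\<in>B. dist a b \<le> D"
  shows "infdist y B \<le> infdist y A + D"
proof -
  have "infdist y B - D \<le> infdist y A"
    unfolding infdist_notempty[OF assms(1)]
  proof (rule cINF_greatest[OF assms(1)])
    fix a assume "a \<in> A"
    then obtain b where "b \<in> B" "dist a b \<le> D" using assms(2) by blast
    have "infdist y B \<le> dist y b" using \<open>b \<in> B\<close> by (rule infdist_le)
    also have "\<dots> \<le> dist y a + dist a b" by (rule dist_triangle)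
    finally show "infdist y B - D \<le> dist y a" using \<open>dist a b \<le> D\<close> by linarith
  qed
  then show ?thesis by linarith
qed

lemma fellow_infdist:
  fixes g g' :: "real \<Rightarrow> 'a::metric_space"
  assumes geo: "geodesic_space TYPE('a)" and g: "geodesic_ray x0 g" and M: "N_Morse_ray M g"
    and g': "geodesic_ray x0 g'" and D: "\<forall>S\<ge>0. \<exists>u\<ge>0. dist (g S) (g' u) \<le> D" and t: "t \<ge> 0"
  shows "infdist (g' t) (g ` {0..}) \<le> M 3 0"
proof -
  have D0: "D \<ge> 0" using D zero_le_dist order_trans by blast
  define S where "S = t + D + 1"
  have S0: "S \<ge> 0" using t D0 by (simp add: S_def)
  obtain u0 where u0: "u0 \<ge> 0" "dist (g S) (g' u0) \<le> D" using D S0 by blast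
  have "u0 = dist x0 (g' u0)" using ray_x0[OF g' u0(1)] by simp
  also have "\<dots> \<le> dist x0 (g S) + dist (g S) (g' u0)" by (rule dist_triangle)
  finally have u0le: "u0 \<le> S + D" using ray_x0[OF g S0] u0(2) by linarith
  have cont: "continuous_on {0..S+D} (\<lambda>u. dist (g S) (g' u))"
    by (intro continuous_intros ray_cont[OF g'])
  have ne: "{0..S+D} \<noteq> {}" using S0 D0 by simp
  obtain \<tau> where tau: "\<tau> \<in> {0..S+D}" "\<And>u. u \<in> {0..S+D} \<Longrightarrow> dist (g S) (g' \<tau>) \<le> dist (g S) (g' u)"
    using continuous_attains_inf[OF compact_Icc ne cont] by blast
  define L where "L = dist (g' \<tau>) (g S)"
  have L0: "L \<ge> 0" by (simp add: L_def)
  have LD: "L \<le> D" using tau(2)[of u0] u0 u0le by (simp add: L_def dist_commute)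
  have "S = dist x0 (g S)" using ray_x0[OF g S0] by simp
  also have "\<dots> \<le> dist x0 (g' \<tau>) + dist (g' \<tau>) (g S)" by (rule dist_triangle)
  finally have taut: "\<tau> \<ge> t" using ray_x0[OF g', of \<tau>] tau(1) LD by (simp add: L_def S_def)
  have tau0: "\<tau> \<ge> 0" using tau(1) by simp
  obtain \<sigma> :: "real \<Rightarrow> 'a" where sig: "\<sigma> 0 = g' \<tau>" "\<sigma> L = g S"
    "\<And>s s'. s \<in> {0..L} \<Longrightarrow> s' \<in> {0..L} \<Longrightarrow> dist (\<sigma> s) (\<sigma> s') = \<bar>s - s'\<bar>"
    using geo unfolding geodesic_space_def L_def by metis
  define c where "c u = (if u \<le> \<tau> then g' u else \<sigma> (u - \<tau>))" for u
  have g'iso: "\<And>s s'. s \<ge> 0 \<Longrightarrow> s' \<ge> 0 \<Longrightarrow> dist (g' s) (g' s') = \<bar>s - s'\<bar>"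
    using g' unfolding geodesic_ray_def by auto
  have cs: "c u = \<sigma> (u - \<tau>)" if "\<tau> \<le> u" for u
    using that sig(1) by (auto simp: c_def)
  have key: "\<bar>s - s'\<bar> / 3 - 0 \<le> dist (c s) (c s') \<and> dist (c s) (c s') \<le> 3 * \<bar>s - s'\<bar> + 0"
    if "s \<in> {0..\<tau>+L}" "s' \<in> {0..\<tau>+L}" "s \<le> s'" for s s'
  proof -
    consider "s' \<le> \<tau>" | "\<tau> \<le> s" | "s < \<tau>" "\<tau> < s'" by linarith
    then have "\<bar>s - s'\<bar> \<le> 3 * dist (c s) (c s') \<and> dist (c s) (c s') \<le> 3 * \<bar>s - s'\<bar>"
    proof cases
      case 1 then show ?thesis using that g'iso[of s s'] by (auto simp: c_def)
    next
      case 2 then show ?thesis using that sig(3)[of "s - \<tau>" "s' - \<tau>"] cs[of s] cs[of s'] by auto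
    next
      case 3
      define v where "v = g' s"
      define w where "w = \<sigma> (s' - \<tau>)"
      have cv: "c s = v" "c s' = w" using 3 by (auto simp: c_def v_def w_def)
      have wt: "dist w (g' \<tau>) = s' - \<tau>" using sig(3)[of "s' - \<tau>" 0] sig(1) 3 that by (auto simp: w_def)
      have wS: "dist (g S) w = L - (s' - \<tau>)" using sig(3)[of L "s' - \<tau>"] sig(2) 3 that L0 by (auto simp: w_def)
      have vt: "dist v (g' \<tau>) = \<tau> - s" using g'iso[of s \<tau>] 3 that by (auto simp: v_def)
      have "L \<le> dist (g S) v" using tau(2)[of s] 3 that tau(1) by (auto simp: L_def v_def dist_commute)
      also have "\<dots> \<le> dist (g S) w + dist w v" by (rule dist_triangle)
      finally have A1: "s' - \<tau> \<le> dist v w" using wS by (simp add: dist_commute)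
      have "\<tau> - s \<le> dist v w + dist w (g' \<tau>)" using vt dist_triangle by metis
      then have A2: "\<tau> - s \<le> dist v w + (s' - \<tau>)" using wt by simp
      have "dist v w \<le> dist v (g' \<tau>) + dist (g' \<tau>) w" by (rule dist_triangle)
      then have A3: "dist v w \<le> s' - s" using vt wt by (simp add: dist_commute)
      show ?thesis using A1 A2 A3 cv 3 by auto
    qed
    then show ?thesis by auto
  qed
  have qg: "quasi_geodesic 3 0 0 (\<tau> + L) c"
    unfolding quasi_geodesic_def
  proof (intro conjI ballI)
    show "0 \<le> \<tau> + L" using tau0 L0 by simp
    fix s s' assume "s \<in> {0..\<tau>+L}" "s' \<in> {0..\<tau>+L}"
    then have "\<bar>s - s'\<bar> / 3 - 0 \<le> dist (c s) (c s') \<and> dist (c s) (c s') \<le> 3 * \<bar>s - s'\<bar> + 0"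
    proof (cases "s \<le> s'")
      case True then show ?thesis using key[of s s'] \<open>s \<in> _\<close> \<open>s' \<in> _\<close> by blast
    next
      case False
      then have "\<bar>s' - s\<bar> / 3 - 0 \<le> dist (c s') (c s) \<and> dist (c s') (c s) \<le> 3 * \<bar>s' - s\<bar> + 0"
        using key[of s' s] \<open>s \<in> _\<close> \<open>s' \<in> _\<close> by simp
      then show ?thesis by (simp add: dist_commute abs_minus_commute)
    qed
    then show "\<bar>s - s'\<bar> / 3 - 0 \<le> dist (c s) (c s')" "dist (c s) (c s') \<le> 3 * \<bar>s - s'\<bar> + 0"
      by blast+
  qed
  have c0: "c 0 \<in> g ` {0..}"
    using tau0 g g' unfolding geodesic_ray_def c_def by (auto intro!: image_eqI[of _ _ 0])
  have c1: "c (\<tau> + L) \<in> g ` {0..}" using cs[of "\<tau> + L"] L0 sig(2) S0 by auto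
  have Mr: "\<And>l e a b (c::real \<Rightarrow> 'a). l \<ge> 1 \<Longrightarrow> e \<ge> 0 \<Longrightarrow> quasi_geodesic l e a b c \<Longrightarrow>
       c a \<in> g ` {0..} \<Longrightarrow> c b \<in> g ` {0..} \<Longrightarrow> (\<forall>t\<in>{a..b}. infdist (c t) (g ` {0..}) \<le> M l e)"
    using M unfolding N_Morse_ray_def by blast
  have all: "\<forall>u\<in>{0..\<tau>+L}. infdist (c u) (g ` {0..}) \<le> M 3 0"
    by (rule Mr[OF _ _ qg c0 c1]) auto
  have "t \<in> {0..\<tau>+L}" using t taut L0 by simp
  then have "infdist (c t) (g ` {0..}) \<le> M 3 0" using all by blast
  then show ?thesis using taut by (simp add: c_def)
qed



lemma fellow_dist:
  fixes g g' :: "real \<Rightarrow> 'a::metric_space"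
  assumes geo: "geodesic_space TYPE('a)" and g: "geodesic_ray x0 g" and M: "N_Morse_ray M g"
    and g': "geodesic_ray x0 g'" and D: "\<forall>S\<ge>0. \<exists>u\<ge>0. dist (g S) (g' u) \<le> D" and t: "t \<ge> 0"
  shows "dist (g t) (g' t) \<le> 2 * M 3 0"
proof (rule field_le_epsilon)
  fix e :: real assume e: "0 < e"
  have K: "infdist (g' t) (g ` {0..}) < M 3 0 + e/2"
    using fellow_infdist[OF assms] e by linarith
  obtain y where y: "y \<in> g ` {0..}" "dist (g' t) y < M 3 0 + e/2"
    using infdist_lessE[OF _ K] by blast
  then obtain s where s: "s \<ge> 0" "y = g s" by auto
  have "s \<le> t + dist (g s) (g' t)"
    using dist_triangle[of x0 "g s" "g' t"] ray_x0[OF g s(1)] ray_x0[OF g' t] by (simp add: dist_commute)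
  moreover have "t \<le> s + dist (g s) (g' t)"
    using dist_triangle[of x0 "g' t" "g s"] ray_x0[OF g s(1)] ray_x0[OF g' t] by (simp add: dist_commute)
  ultimately have st: "\<bar>t - s\<bar> \<le> dist (g s) (g' t)" by linarith
  have "dist (g t) (g' t) \<le> dist (g t) (g s) + dist (g s) (g' t)" by (rule dist_triangle)
  also have "\<dots> \<le> \<bar>t - s\<bar> + dist (g s) (g' t)" using ray_lip[OF g, of t s] by linarith
  finally show "dist (g t) (g' t) \<le> 2 * M 3 0 + e"
    using st y s by (simp add: dist_commute)
qed

lemma fh_refl: "fin_hausdorff g g"
  unfolding fin_hausdorff_def by (rule exI[of _ 0]) auto

lemma fh_sym: assumes "fin_hausdorff g h" shows "fin_hausdorff h g"
proof -
  obtain C where C: "\<forall>s\<ge>0. \<exists>t\<ge>0. dist (g s) (h t) \<le> C" "\<forall>t\<ge>0. \<exists>s\<ge>0. dist (g s) (h t) \<le> C"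
    using assms unfolding fin_hausdorff_def by blast
  show ?thesis unfolding fin_hausdorff_def
    by (rule exI[of _ C]) (use C in \<open>simp add: dist_commute\<close>)
qed

lemma fh_trans: assumes "fin_hausdorff g h" "fin_hausdorff h k" shows "fin_hausdorff g k"
proof -
  obtain C1 where C1: "\<forall>s\<ge>0. \<exists>t\<ge>0. dist (g s) (h t) \<le> C1" "\<forall>t\<ge>0. \<exists>s\<ge>0. dist (g s) (h t) \<le> C1"
    using assms(1) unfolding fin_hausdorff_def by blast
  obtain C2 where C2: "\<forall>s\<ge>0. \<exists>t\<ge>0. dist (h s) (k t) \<le> C2" "\<forall>t\<ge>0. \<exists>s\<ge>0. dist (h s) (k t) \<le> C2"
    using assms(2) unfolding fin_hausdorff_def by blast
  have "\<forall>s\<ge>0. \<exists>t\<ge>0. dist (g s) (k t) \<le> C1 + C2"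
  proof (intro allI impI)
    fix s :: real assume "s \<ge> 0"
    then obtain u where u: "u \<ge> 0" "dist (g s) (h u) \<le> C1" using C1 by blast
    then obtain t where t: "t \<ge> 0" "dist (h u) (k t) \<le> C2" using C2 by blast
    show "\<exists>t\<ge>0. dist (g s) (k t) \<le> C1 + C2"
      using u t dist_triangle[of "g s" "k t" "h u"] by (intro exI[of _ t]) auto
  qed
  moreover have "\<forall>t\<ge>0. \<exists>s\<ge>0. dist (g s) (k t) \<le> C1 + C2"
  proof (intro allI impI)
    fix t :: real assume "t \<ge> 0"
    then obtain u where u: "u \<ge> 0" "dist (h u) (k t) \<le> C2" using C2 by blast
    then obtain s where s: "s \<ge> 0" "dist (g s) (h u) \<le> C1" using C1 by blast
    show "\<exists>s\<ge>0. dist (g s) (k t) \<le> C1 + C2"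
      using u s dist_triangle[of "g s" "k t" "h u"] by (intro exI[of _ s]) auto
  qed
  ultimately show ?thesis unfolding fin_hausdorff_def by blast
qed

lemma fh_bound: "(\<And>t. t \<ge> 0 \<Longrightarrow> dist (g t) (h t) \<le> C) \<Longrightarrow> fin_hausdorff g h"
  unfolding fin_hausdorff_def by (rule exI[of _ C]) blast

lemma class_eq: assumes "fin_hausdorff g h" shows "morse_class x0 g = morse_class x0 h"
proof -
  have "fin_hausdorff g k \<longleftrightarrow> fin_hausdorff h k" for k
    using fh_trans[OF fh_sym[OF assms], of k] fh_trans[OF assms, of k] by blast
  then show ?thesis unfolding morse_class_def by simp
qed

lemma class_fh: assumes "Morse_ray x0 h" "morse_class x0 g = morse_class x0 h" shows "fin_hausdorff g h"
proof -
  have "h \<in> morse_class x0 h" using assms(1) fh_refl[of h] unfolding morse_class_def by simp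
  then have "h \<in> morse_class x0 g" using assms(2) by simp
  then show ?thesis unfolding morse_class_def by simp
qed

lemma NR_Morse: "morse_gauge M \<Longrightarrow> g \<in> NMorse_rays x0 M \<Longrightarrow> Morse_ray x0 g"
  unfolding NMorse_rays_def Morse_ray_def by blast

lemma fellow_class:
  fixes g h :: "real \<Rightarrow> 'a::metric_space"
  assumes geo: "geodesic_space TYPE('a)" and g: "g \<in> NMorse_rays x0 M" and h: "Morse_ray x0 h"
    and eq: "morse_class x0 g = morse_class x0 h" and t: "t \<ge> 0"
  shows "dist (g t) (h t) \<le> 2 * M 3 0"
proof -
  obtain C where "\<forall>S\<ge>0. \<exists>u\<ge>0. dist (g S) (h u) \<le> C"
    using class_fh[OF h eq] unfolding fin_hausdorff_def by blast
  moreover have "geodesic_ray x0 g" "N_Morse_ray M g" using g unfolding NMorse_rays_def by auto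
  moreover have "geodesic_ray x0 h" using h unfolding Morse_ray_def by auto
  ultimately show ?thesis
    using fellow_dist[OF geo _ _ _ _ t] by blast
qed

lemma qg_mono: assumes "quasi_geodesic l e a b c" "e \<le> e'" shows "quasi_geodesic l e' a b c"
  unfolding quasi_geodesic_def
proof (intro conjI ballI)
  show "a \<le> b" using assms(1) unfolding quasi_geodesic_def by blast
  fix s t assume st: "s \<in> {a..b}" "t \<in> {a..b}"
  have q: "\<bar>s - t\<bar> / l - e \<le> dist (c s) (c t)" "dist (c s) (c t) \<le> l * \<bar>s - t\<bar> + e"
    using assms(1) st unfolding quasi_geodesic_def by auto
  show "\<bar>s - t\<bar> / l - e' \<le> dist (c s) (c t)" "dist (c s) (c t) \<le> l * \<bar>s - t\<bar> + e'"
    using q assms(2) by linarith+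
qed

lemma qg_perturb:
  assumes "quasi_geodesic l e a b c" "\<And>v. dist (c' v) (c v) \<le> D"
  shows "quasi_geodesic l (e + 2 * D) a b c'"
  unfolding quasi_geodesic_def
proof (intro conjI ballI)
  show "a \<le> b" using assms(1) unfolding quasi_geodesic_def by blast
  fix s t assume st: "s \<in> {a..b}" "t \<in> {a..b}"
  have q: "\<bar>s - t\<bar> / l - e \<le> dist (c s) (c t)" "dist (c s) (c t) \<le> l * \<bar>s - t\<bar> + e"
    using assms(1) st unfolding quasi_geodesic_def by auto
  have t1: "dist (c s) (c t) \<le> dist (c s) (c' s) + dist (c' s) (c t)" by (rule dist_triangle)
  have t2: "dist (c' s) (c t) \<le> dist (c' s) (c' t) + dist (c' t) (c t)" by (rule dist_triangle)
  have t3: "dist (c' s) (c' t) \<le> dist (c' s) (c s) + dist (c s) (c' t)" by (rule dist_triangle)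
  have t4: "dist (c s) (c' t) \<le> dist (c s) (c t) + dist (c t) (c' t)" by (rule dist_triangle)
  have d: "dist (c s) (c' s) \<le> D" "dist (c' s) (c s) \<le> D" "dist (c t) (c' t) \<le> D" "dist (c' t) (c t) \<le> D"
    using assms(2)[of s] assms(2)[of t] by (auto simp: dist_commute)
  show "\<bar>s - t\<bar> / l - (e + 2 * D) \<le> dist (c' s) (c' t)"
      "dist (c' s) (c' t) \<le> l * \<bar>s - t\<bar> + (e + 2 * D)"
    using q t1 t2 t3 t4 d by linarith+
qed

lemma transfer:
  fixes \<phi> \<psi> :: "real \<Rightarrow> 'a::metric_space"
  assumes phi: "geodesic_ray x0 \<phi>" "N_Morse_ray M \<phi>" and psi: "geodesic_ray x0 \<psi>"
    and close: "\<And>t. t \<ge> 0 \<Longrightarrow> dist (\<phi> t) (\<psi> t) \<le> D"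
    and le: "l \<ge> 1" "e \<ge> 0" and qg: "quasi_geodesic l e a b c"
    and ca: "c a \<in> \<psi> ` {0..}" and cb: "c b \<in> \<psi> ` {0..}" and u: "u \<in> {a..b}"
  shows "infdist (c u) (\<psi> ` {0..}) \<le> M l (e + 2 * D) + 2 * D"
proof -
  obtain s1 where s1: "s1 \<ge> 0" "c a = \<psi> s1" using ca by auto
  obtain s2 where s2: "s2 \<ge> 0" "c b = \<psi> s2" using cb by auto
  have D0: "D \<ge> 0" using close[of 0] zero_le_dist[of "\<phi> 0" "\<psi> 0"] by linarith
  define c' where "c' v = (if v = a then \<phi> s1 else if v = b then \<phi> s2 else c v)" for v
  have mv: "dist (c' v) (c v) \<le> D" for v
    using close[OF s1(1)] close[OF s2(1)] s1 s2 D0 by (auto simp: c'_def)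
  have qg': "quasi_geodesic l (e + 2 * D) a b c'" by (rule qg_perturb[OF qg mv])
  have "c' a \<in> \<phi> ` {0..}" "c' b \<in> \<phi> ` {0..}" using s1 s2 by (auto simp: c'_def)
  then have I1: "infdist (c' u) (\<phi> ` {0..}) \<le> M l (e + 2 * D)"
    using phi(2) qg' le D0 u unfolding N_Morse_ray_def by auto
  have I2: "infdist (c' u) (\<psi> ` {0..}) \<le> infdist (c' u) (\<phi> ` {0..}) + D"
    by (rule infdist_transfer) (use close in auto)
  have "infdist (c u) (\<psi> ` {0..}) \<le> infdist (c' u) (\<psi> ` {0..}) + dist (c u) (c' u)"
    by (rule infdist_triangle)
  then show ?thesis using I1 I2 mv[of u] by (simp add: dist_commute)
qed



lemma unif_conv:
  fixes \<phi> :: "nat \<Rightarrow> real \<Rightarrow> 'a::metric_space" and f :: "real \<Rightarrow> 'a"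
  assumes lip: "\<And>n s t. dist (\<phi> n s) (\<phi> n t) \<le> \<bar>s - t\<bar>" and lipf: "\<And>s t. dist (f s) (f t) \<le> \<bar>s - t\<bar>"
    and conv: "\<And>t. t \<ge> 0 \<Longrightarrow> (\<lambda>n. \<phi> n t) \<longlonglongrightarrow> f t" and e: "e > 0"
  shows "eventually (\<lambda>n. \<forall>t\<in>{0..R}. dist (\<phi> n t) (f t) < e) sequentially"
proof -
  define \<delta> where "\<delta> = e / 3"
  have \<delta>: "\<delta> > 0" using e by (simp add: \<delta>_def)
  define K where "K = nat \<lceil>R / \<delta>\<rceil>"
  define G where "G = (\<lambda>i. real i * \<delta>) ` {..K}"
  have finG: "finite G" by (simp add: G_def)
  have "\<forall>g\<in>G. eventually (\<lambda>n. dist (\<phi> n g) (f g) < \<delta>) sequentially"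
    using conv \<delta> by (auto simp: G_def intro!: tendstoD)
  then have ev: "eventually (\<lambda>n. \<forall>g\<in>G. dist (\<phi> n g) (f g) < \<delta>) sequentially"
    by (intro eventually_ball_finite finG)
  show ?thesis
  proof (rule eventually_mono[OF ev], intro ballI)
    fix n t assume H: "\<forall>g\<in>G. dist (\<phi> n g) (f g) < \<delta>" and t: "t \<in> {0..R}"
    define i where "i = nat \<lfloor>t / \<delta>\<rfloor>"
    have q0: "t / \<delta> \<ge> 0" using t \<delta> by simp
    have ri: "real i = of_int \<lfloor>t / \<delta>\<rfloor>" using q0 by (simp add: i_def)
    have f1: "real i \<le> t / \<delta>" "t / \<delta> < real i + 1" unfolding ri by linarith+
    have ti1: "real i * \<delta> \<le> t" using f1(1) \<delta> by (simp add: pos_le_divide_eq)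
    have ti2: "t < real i * \<delta> + \<delta>" using f1(2) \<delta> by (simp add: pos_divide_less_eq distrib_right)
    have "t / \<delta> \<le> R / \<delta>" using t \<delta> by (simp add: divide_right_mono)
    then have "\<lfloor>t / \<delta>\<rfloor> \<le> \<lceil>R / \<delta>\<rceil>" by linarith
    then have "i \<le> K" unfolding i_def K_def by (simp add: nat_mono)
    then have gG: "real i * \<delta> \<in> G" unfolding G_def by (intro image_eqI[of _ _ i]) auto
    define g where "g = real i * \<delta>"
    have "dist (\<phi> n t) (f t) \<le> dist (\<phi> n t) (\<phi> n g) + dist (\<phi> n g) (f t)" by (rule dist_triangle)
    also have "\<dots> \<le> dist (\<phi> n t) (\<phi> n g) + (dist (\<phi> n g) (f g) + dist (f g) (f t))"
      using dist_triangle by (simp add: add_left_mono)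
    also have "\<dots> < \<delta> + (\<delta> + \<delta>)"
    proof -
      have "dist (\<phi> n t) (\<phi> n g) < \<delta>" using lip[of n t g] ti1 ti2 by (simp add: g_def)
      moreover have "dist (f g) (f t) < \<delta>" using lipf[of g t] ti1 ti2 by (simp add: g_def)
      moreover have "dist (\<phi> n g) (f g) < \<delta>" using H gG by (simp add: g_def)
      ultimately show ?thesis by linarith
    qed
    finally show "dist (\<phi> n t) (f t) < e" by (simp add: \<delta>_def)
  qed
qed

lemma co_limit:
  fixes \<phi> :: "nat \<Rightarrow> real \<Rightarrow> 'a::metric_space" and f :: "real \<Rightarrow> 'a"
  assumes S: "\<And>n. \<phi> n \<in> S" "f \<in> S"
    and lip: "\<And>n s t. dist (\<phi> n s) (\<phi> n t) \<le> \<bar>s - t\<bar>" and lipf: "\<And>s t. dist (f s) (f t) \<le> \<bar>s - t\<bar>"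
    and conv: "\<And>t. t \<ge> 0 \<Longrightarrow> (\<lambda>n. \<phi> n t) \<longlonglongrightarrow> f t"
  shows "limitin (compact_open_on S) \<phi> f sequentially"
proof -
  define B where "B = {{g::real\<Rightarrow>'a. g ` K \<subseteq> U} | K U. compact K \<and> K \<subseteq> {0..} \<and> open U}"
  have "UNIV \<in> B" unfolding B_def by (rule CollectI, rule exI[of _ "{}"], rule exI[of _ UNIV]) auto
  then have top: "f \<in> topspace (topology_generated_by B)" by auto
  have main: "generate_topology_on B W \<Longrightarrow> f \<in> W \<longrightarrow> eventually (\<lambda>n. \<phi> n \<in> W) sequentially" for W
  proof (induction rule: generate_topology_on.induct)
    case Empty then show ?case by simp
  next
    case (Int a b) then show ?case by (auto intro: eventually_conj)
  next
    case (UN K) then show ?case by (auto intro: eventually_mono)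
  next
    case (Basis s)
    then obtain K U where sKU: "s = {g. g ` K \<subseteq> U}" "compact K" "K \<subseteq> {0..}" "open U"
      unfolding B_def by blast
    show ?case
    proof
      assume "f \<in> s"
      then have fK: "f ` K \<subseteq> U" using sKU by simp
      have "compact (f ` K)" by (rule compact_continuous_image[OF lip_cont[OF lipf] sKU(2)])
      then obtain \<epsilon> where \<epsilon>: "0 < \<epsilon>" "\<And>x. x \<in> f ` K \<Longrightarrow> \<exists>G\<in>{U}. ball x \<epsilon> \<subseteq> G"
        using Heine_Borel_lemma[of "f ` K" "{U}"] fK sKU(4) by auto
      obtain R where R: "\<forall>x\<in>K. \<bar>x\<bar> \<le> R" using compact_imp_bounded[OF sKU(2)] bounded_real by blast
      have ev: "eventually (\<lambda>n. \<forall>t\<in>{0..R}. dist (\<phi> n t) (f t) < \<epsilon>) sequentially"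
        by (rule unif_conv[OF lip lipf conv \<epsilon>(1)])
      show "eventually (\<lambda>n. \<phi> n \<in> s) sequentially"
      proof (rule eventually_mono[OF ev])
        fix n assume H: "\<forall>t\<in>{0..R}. dist (\<phi> n t) (f t) < \<epsilon>"
        have "\<phi> n t \<in> U" if "t \<in> K" for t
        proof -
          have "t \<in> {0..R}" using that R sKU(3) by force
          then have "\<phi> n t \<in> ball (f t) \<epsilon>" using H by (simp add: dist_commute)
          then show ?thesis using \<epsilon>(2)[of "f t"] that by auto
        qed
        then show "\<phi> n \<in> s" using sKU(1) by auto
      qed
    qed
  qed
  have "limitin (topology_generated_by B) \<phi> f sequentially"
    unfolding limitin_def using top main openin_topology_generated_by by blast
  then show ?thesis
    unfolding compact_open_on_def limitin_subtopology B_def[symmetric] using S by auto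
qed

lemma ray_AA:
  fixes h :: "nat \<Rightarrow> real \<Rightarrow> 'a::metric_space"
  assumes proper: "proper_space TYPE('a)" and rays: "\<And>n. geodesic_ray x0 (h n)"
  shows "\<exists>r f. strict_mono r \<and> (\<forall>t. (\<lambda>j. h (r j) t) \<longlonglongrightarrow> f t)"
proof -
  have inball: "h n t \<in> cball x0 \<bar>t\<bar>" for n t
  proof -
    have "h n 0 = x0" using rays[of n] unfolding geodesic_ray_def by simp
    then show ?thesis using ray_lip[OF rays[of n], of 0 t] by simp
  qed
  have cpt: "compact (cball x0 r)" for r using proper unfolding proper_space_def by blast
  obtain m :: "real \<Rightarrow> nat" where "bij_betw m \<rat> UNIV"
    using countable_rat Rats_infinite by (erule countableE_infinite)
  then obtain q :: "nat \<Rightarrow> real" where bij: "bij_betw q UNIV \<rat>"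
    using bij_betw_inv by blast
  have dense: "\<And>x y. x < y \<Longrightarrow> \<exists>n. x < q n \<and> q n < y"
    by (metis Rats_dense_in_real bij f_the_inv_into_f bij_betw_def)
  let ?P = "\<lambda>n. \<lambda>s. convergent (\<lambda>k. h (s k) (q n))"
  interpret nat: subseqs ?P
  proof (unfold_locales)
    fix n :: nat and s :: "nat \<Rightarrow> nat" assume s: "strict_mono s"
    have "\<forall>k. h (s k) (q n) \<in> cball x0 \<bar>q n\<bar>" using inball by blast
    then obtain l r where "strict_mono (r :: nat \<Rightarrow> nat)" "((\<lambda>k. h (s k) (q n)) \<circ> r) \<longlonglongrightarrow> l"
      using seq_compactE[OF compact_imp_seq_compact[OF cpt]] by metis
    then show "\<exists>r'. strict_mono r' \<and> convergent (\<lambda>k. h ((s \<circ> r') k) (q n))"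
      by (auto simp: convergent_def o_def)
  qed
  define d where "d = nat.diagseq"
  have subseq: "strict_mono d"
    unfolding d_def using nat.subseq_diagseq by auto
  have rat_cnv: "?P n d" for n
  proof -
    have Pn_seqseq: "?P n (nat.seqseq (Suc n))"
      by (rule nat.seqseq_holds)
    have 1: "(\<lambda>k. h ((nat.seqseq (Suc n) \<circ> (\<lambda>k. nat.fold_reduce (Suc n) k
      (Suc n + k))) k) (q n)) = (\<lambda>k. h (nat.seqseq (Suc n) k) (q n)) \<circ>
      (\<lambda>k. nat.fold_reduce (Suc n) k (Suc n + k))"
      by auto
    have 2: "?P n (d \<circ> ((+) (Suc n)))"
      unfolding d_def nat.diagseq_seqseq 1
      by (intro convergent_subseq_convergent Pn_seqseq nat.subseq_diagonal_rest)
    then obtain L where 3: "(\<lambda>na. h (d (na + Suc n)) (q n)) \<longlonglongrightarrow> L"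
      by (auto simp: add.commute dest: convergentD)
    then have "(\<lambda>k. h (d k) (q n)) \<longlonglongrightarrow> L"
      by (rule LIMSEQ_offset)
    then show ?thesis
      by (auto simp: convergent_def)
  qed
  have cauchy: "Cauchy (\<lambda>k. h (d k) t)" for t
  proof (rule metric_CauchyI)
    fix e :: real assume e: "0 < e"
    obtain n where n: "t < q n" "q n < t + e/3" using dense[of t "t + e/3"] e by auto
    obtain M where M: "\<forall>m\<ge>M. \<forall>k\<ge>M. dist (h (d m) (q n)) (h (d k) (q n)) < e/3"
      using metric_CauchyD[OF convergent_Cauchy[OF rat_cnv[of n]], of "e/3"] e by auto
    show "\<exists>M. \<forall>m\<ge>M. \<forall>k\<ge>M. dist (h (d m) t) (h (d k) t) < e"
    proof (intro exI allI impI)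
      fix m k assume mk: "M \<le> m" "M \<le> k"
      have "dist (h (d m) t) (h (d k) t) \<le> dist (h (d m) t) (h (d m) (q n)) + dist (h (d m) (q n)) (h (d k) t)"
        by (rule dist_triangle)
      also have "\<dots> \<le> dist (h (d m) t) (h (d m) (q n)) + (dist (h (d m) (q n)) (h (d k) (q n)) + dist (h (d k) (q n)) (h (d k) t))"
        using dist_triangle by (simp add: add_left_mono)
      also have "\<dots> < e/3 + (e/3 + e/3)"
      proof -
        have "dist (h (d m) t) (h (d m) (q n)) < e/3" using ray_lip[OF rays, of "d m" t "q n"] n by simp
        moreover have "dist (h (d k) (q n)) (h (d k) t) < e/3" using ray_lip[OF rays, of "d k" "q n" t] n by simp
        moreover have "dist (h (d m) (q n)) (h (d k) (q n)) < e/3" using M mk by blast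
        ultimately show ?thesis by linarith
      qed
      finally show "dist (h (d m) t) (h (d k) t) < e" by simp
    qed
  qed
  have "\<exists>l. (\<lambda>k. h (d k) t) \<longlonglongrightarrow> l" for t
  proof -
    have "complete (cball x0 \<bar>t\<bar>)" by (rule compact_imp_complete[OF cpt])
    then have "\<forall>f. (\<forall>n. f n \<in> cball x0 \<bar>t\<bar>) \<and> Cauchy f \<longrightarrow> (\<exists>l\<in>cball x0 \<bar>t\<bar>. f \<longlonglongrightarrow> l)"
      unfolding complete_def .
    then have "(\<forall>n. h (d n) t \<in> cball x0 \<bar>t\<bar>) \<and> Cauchy (\<lambda>k. h (d k) t) \<longrightarrow> (\<exists>l\<in>cball x0 \<bar>t\<bar>. (\<lambda>k. h (d k) t) \<longlonglongrightarrow> l)"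
      by (rule spec)
    then show ?thesis using cauchy[of t] inball by blast
  qed
  then obtain f where "\<And>t. (\<lambda>k. h (d k) t) \<longlonglongrightarrow> f t" by metis
  then show ?thesis using subseq by blast
qed

lemma limit_ray:
  fixes \<psi> :: "nat \<Rightarrow> real \<Rightarrow> 'a::metric_space"
  assumes rays: "\<And>j. geodesic_ray x0 (\<psi> j)" and conv: "\<And>t. (\<lambda>j. \<psi> j t) \<longlonglongrightarrow> f t"
  shows "geodesic_ray x0 f"
proof -
  have x: "f t = x0" if "t \<le> 0" for t
  proof -
    have "\<psi> j t = x0" for j using rays[of j] that unfolding geodesic_ray_def by (cases "t = 0") auto
    then have "(\<lambda>j. x0) \<longlonglongrightarrow> f t" using conv[of t] by simp
    then show ?thesis using LIMSEQ_const_iff by metis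
  qed
  have d: "dist (f s) (f t) = \<bar>s - t\<bar>" if "s \<ge> 0" "t \<ge> 0" for s t
  proof -
    have "(\<lambda>j. dist (\<psi> j s) (\<psi> j t)) \<longlonglongrightarrow> dist (f s) (f t)" by (intro tendsto_dist conv)
    moreover have "dist (\<psi> j s) (\<psi> j t) = \<bar>s - t\<bar>" for j using rays[of j] that unfolding geodesic_ray_def by auto
    ultimately show ?thesis using LIMSEQ_const_iff by (metis (no_types, lifting) ext)
  qed
  show ?thesis unfolding geodesic_ray_def using x d by auto
qed

lemma limit_morse:
  fixes \<psi> :: "nat \<Rightarrow> real \<Rightarrow> 'a::metric_space"
  assumes rays: "\<And>j. geodesic_ray x0 (\<psi> j)" and conv: "\<And>t. (\<lambda>j. \<psi> j t) \<longlonglongrightarrow> f t"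
    and fr: "geodesic_ray x0 f"
    and bnd: "\<And>j a b c u. quasi_geodesic l (e+1) a b c \<Longrightarrow> c a \<in> \<psi> j ` {0..} \<Longrightarrow> c b \<in> \<psi> j ` {0..}
       \<Longrightarrow> u \<in> {a..b} \<Longrightarrow> infdist (c u) (\<psi> j ` {0..}) \<le> \<beta>"
    and qg: "quasi_geodesic l e a b c" and ca: "c a \<in> f ` {0..}" and cb: "c b \<in> f ` {0..}" and u: "u \<in> {a..b}"
  shows "infdist (c u) (f ` {0..}) \<le> \<beta> + 1"
proof -
  obtain s1 where s1: "s1 \<ge> 0" "c a = f s1" using ca by auto
  obtain s2 where s2: "s2 \<ge> 0" "c b = f s2" using cb by auto
  define R where "R = dist x0 (c u) + \<bar>\<beta>\<bar> + 1 + s1 + s2"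
  have "eventually (\<lambda>j. \<forall>t\<in>{0..R}. dist (\<psi> j t) (f t) < 1/4) sequentially"
    by (rule unif_conv) (use ray_lip[OF rays] ray_lip[OF fr] conv in auto)
  then obtain j where J: "\<forall>t\<in>{0..R}. dist (\<psi> j t) (f t) < 1/4"
    unfolding eventually_sequentially by blast
  define c' where "c' v = (if v = a then \<psi> j s1 else if v = b then \<psi> j s2 else c v)" for v
  have s1R: "s1 \<in> {0..R}" "s2 \<in> {0..R}" using s1 s2 by (auto simp: R_def)
  have mv: "dist (c' v) (c v) \<le> 1/4" for v
    using J s1R s1 s2 by (auto simp: c'_def less_imp_le)
  have qg': "quasi_geodesic l (e + 1) a b c'"
    using qg_mono[OF qg_perturb[OF qg mv]] by simp
  have "c' a \<in> \<psi> j ` {0..}" "c' b \<in> \<psi> j ` {0..}" using s1 s2 by (auto simp: c'_def)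
  then have I: "infdist (c' u) (\<psi> j ` {0..}) \<le> \<beta>" using bnd qg' u by blast
  have "infdist (c u) (\<psi> j ` {0..}) \<le> infdist (c' u) (\<psi> j ` {0..}) + dist (c u) (c' u)"
    by (rule infdist_triangle)
  then have "infdist (c u) (\<psi> j ` {0..}) < \<beta> + 1/2" using I mv[of u] by (simp add: dist_commute)
  then obtain y where y: "y \<in> \<psi> j ` {0..}" "dist (c u) y < \<beta> + 1/2"
    using infdist_lessE[of "\<psi> j ` {0..}"] by blast
  then obtain s where s: "s \<ge> 0" "y = \<psi> j s" by auto
  have "s = dist x0 (\<psi> j s)" using ray_x0[OF rays s(1)] by simp
  also have "\<dots> \<le> dist x0 (c u) + dist (c u) (\<psi> j s)" by (rule dist_triangle)
  finally have sle: "s \<le> dist x0 (c u) + dist (c u) (\<psi> j s)" .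
  have "dist (c u) (\<psi> j s) < \<beta> + 1/2" using y s by simp
  then have "s \<in> {0..R}" using sle s(1) s1(1) s2(1) abs_ge_self[of \<beta>] unfolding R_def by simp
  then have "dist (\<psi> j s) (f s) < 1/4" using J by blast
  then have "dist (c u) (f s) \<le> \<beta> + 1" using y s dist_triangle[of "c u" "f s" "\<psi> j s"] by simp
  then show ?thesis using s(1) by (intro infdist_le2[of "f s"]) auto
qed



abbreviation COB :: "(real \<Rightarrow> 'a::topological_space) set set" where
  "COB \<equiv> {{f. f ` K \<subseteq> U} | K U. compact K \<and> K \<subseteq> {0..} \<and> open U}"

lemma openin_quot:
  "openin (quotient_topology T q) U \<longleftrightarrow> U \<subseteq> q ` topspace T \<and> openin T {x \<in> topspace T. q x \<in> U}"
proof -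
  define P where "P = (\<lambda>U. U \<subseteq> q ` topspace T \<and> openin T {x \<in> topspace T. q x \<in> U})"
  have "istopology P"
    unfolding istopology_def
  proof (intro conjI allI impI)
    fix S S' assume "P S" "P S'"
    moreover have "{x \<in> topspace T. q x \<in> S \<inter> S'} = {x \<in> topspace T. q x \<in> S} \<inter> {x \<in> topspace T. q x \<in> S'}"
      by auto
    ultimately show "P (S \<inter> S')"
      unfolding P_def by (auto intro: openin_Int)
  next
    fix K assume K: "\<forall>S\<in>K. P S"
    have "{x \<in> topspace T. q x \<in> \<Union>K} = \<Union>((\<lambda>S. {x \<in> topspace T. q x \<in> S}) ` K)" by auto
    moreover have "openin T (\<Union>((\<lambda>S. {x \<in> topspace T. q x \<in> S}) ` K))"
      using K unfolding P_def by (intro openin_Union) auto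
    ultimately show "P (\<Union>K)"
      using K unfolding P_def by auto
  qed
  then show ?thesis unfolding quotient_topology_def P_def[symmetric] by (simp add: P_def)
qed

lemma topspace_quot: "topspace (quotient_topology T q) = q ` topspace T"
proof -
  have eq: "{x \<in> topspace T. q x \<in> q ` topspace T} = topspace T" by auto
  have "openin (quotient_topology T q) (q ` topspace T)"
    unfolding openin_quot eq by auto
  then have "q ` topspace T \<subseteq> topspace (quotient_topology T q)" by (rule openin_subset)
  moreover have "topspace (quotient_topology T q) \<subseteq> q ` topspace T"
    unfolding topspace_def openin_quot by auto
  ultimately show ?thesis by blast
qed

lemma topspace_co: "topspace (compact_open_on S) = S"
proof -
  have "UNIV \<in> (COB :: (real \<Rightarrow> 'a::topological_space) set set)"
    by (rule CollectI, rule exI[of _ "{}"], rule exI[of _ UNIV]) auto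
  then show ?thesis unfolding compact_open_on_def by auto
qed

lemma topspace_MBN: "topspace (Morse_boundary_N_top x0 N) = Morse_boundary_N x0 N"
  unfolding Morse_boundary_N_top_def topspace_quot topspace_co Morse_boundary_N_def ..

lemma openin_MB: "openin (Morse_boundary_top x0) U \<longleftrightarrow> U \<subseteq> Morse_boundary x0 \<and>
     (\<forall>N. morse_gauge N \<longrightarrow> openin (Morse_boundary_N_top x0 N) (U \<inter> Morse_boundary_N x0 N))"
proof -
  define P where "P = (\<lambda>U. U \<subseteq> Morse_boundary x0 \<and>
     (\<forall>N. morse_gauge N \<longrightarrow> openin (Morse_boundary_N_top x0 N) (U \<inter> Morse_boundary_N x0 N)))"
  have "istopology P"
    unfolding istopology_def
  proof (intro conjI allI impI)
    fix S S' assume S: "P S" and S': "P S'"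
    have "S \<inter> S' \<inter> Morse_boundary_N x0 N = (S \<inter> Morse_boundary_N x0 N) \<inter> (S' \<inter> Morse_boundary_N x0 N)" for N
      by auto
    then show "P (S \<inter> S')"
      using S S' unfolding P_def by (auto intro: openin_Int)
  next
    fix K assume K: "\<forall>S\<in>K. P S"
    have "\<Union>K \<inter> Morse_boundary_N x0 N = \<Union>((\<lambda>S. S \<inter> Morse_boundary_N x0 N) ` K)" for N by auto
    moreover have "openin (Morse_boundary_N_top x0 N) (\<Union>((\<lambda>S. S \<inter> Morse_boundary_N x0 N) ` K))"
      if "morse_gauge N" for N
      using K that unfolding P_def by (intro openin_Union) auto
    ultimately show "P (\<Union>K)" using K unfolding P_def by auto
  qed
  then show ?thesis unfolding Morse_boundary_top_def P_def[symmetric] by (simp add: P_def)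
qed

lemma open_pt: "T \<ge> 0 \<Longrightarrow> openin (topology_generated_by COB) {\<phi>::real\<Rightarrow>'a::metric_space. dist (\<phi> T) y < r}"
proof -
  assume T: "T \<ge> 0"
  have "{\<phi>::real\<Rightarrow>'a. dist (\<phi> T) y < r} = {\<phi>. \<phi> ` {T} \<subseteq> ball y r}" by (auto simp: dist_commute)
  also have "\<dots> \<in> COB" using T by (intro CollectI exI[of _ "{T}"] exI[of _ "ball y r"]) auto
  finally show ?thesis by (rule topology_generated_by_Basis)
qed

lemma closed_crit:
  fixes g :: "real \<Rightarrow> 'a::metric_space"
  assumes geo: "geodesic_space TYPE('a)" and M: "morse_gauge M" and g: "g \<in> NMorse_rays x0 M"
    and gA: "morse_class x0 g \<notin> A" and Q: "finite Q" and AQE: "A \<inter> Morse_boundary_N x0 M \<subseteq> Q \<union> E"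
    and T0: "T0 \<ge> 0"
    and E: "\<And>\<phi>. \<phi> \<in> NMorse_rays x0 M \<Longrightarrow> morse_class x0 \<phi> \<in> E \<Longrightarrow> dist (\<phi> T0) (g T0) \<ge> 1"
  shows "\<exists>Y. openin (topology_generated_by COB) Y \<and> g \<in> Y \<and>
            (\<forall>\<phi> \<in> Y \<inter> NMorse_rays x0 M. morse_class x0 \<phi> \<notin> A)"
proof -
  define C where "C = 2 * M 3 0"
  have sep: "\<exists>T. T \<ge> 0 \<and> (\<forall>\<phi>\<in>NMorse_rays x0 M. morse_class x0 \<phi> = q \<longrightarrow> dist (\<phi> T) (g T) \<ge> 1)"
    if q: "q \<noteq> morse_class x0 g" for q
  proof (cases "\<exists>\<psi>\<in>NMorse_rays x0 M. morse_class x0 \<psi> = q")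
    case False then show ?thesis by blast
  next
    case True
    then obtain \<psi> where psi: "\<psi> \<in> NMorse_rays x0 M" "morse_class x0 \<psi> = q" by blast
    have psiM: "Morse_ray x0 \<psi>" by (rule NR_Morse[OF M psi(1)])
    have "\<exists>T\<ge>0. dist (g T) (\<psi> T) > C + 1"
    proof (rule ccontr)
      assume "\<not> ?thesis"
      then have "\<And>t. t \<ge> 0 \<Longrightarrow> dist (g t) (\<psi> t) \<le> C + 1" by (simp add: not_less)
      then have "fin_hausdorff g \<psi>" by (rule fh_bound)
      then have "morse_class x0 g = q" using class_eq psi(2) by metis
      then show False using q by simp
    qed
    then obtain T where T: "T \<ge> 0" "dist (g T) (\<psi> T) > C + 1" by blast
    have "dist (\<phi> T) (g T) \<ge> 1" if phi: "\<phi> \<in> NMorse_rays x0 M" "morse_class x0 \<phi> = q" for \<phi>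
    proof -
      have "dist (\<phi> T) (\<psi> T) \<le> C" unfolding C_def
        by (rule fellow_class[OF geo phi(1) psiM _ T(1)]) (simp add: phi(2) psi(2))
      moreover have "dist (g T) (\<psi> T) \<le> dist (g T) (\<phi> T) + dist (\<phi> T) (\<psi> T)" by (rule dist_triangle)
      ultimately show ?thesis using T(2) by (simp add: dist_commute)
    qed
    then show ?thesis using T(1) by blast
  qed
  define \<tau> where "\<tau> q = (SOME T. T \<ge> 0 \<and> (\<forall>\<phi>\<in>NMorse_rays x0 M. morse_class x0 \<phi> = q \<longrightarrow> dist (\<phi> T) (g T) \<ge> 1))" for q
  have tau: "\<tau> q \<ge> 0 \<and> (\<forall>\<phi>\<in>NMorse_rays x0 M. morse_class x0 \<phi> = q \<longrightarrow> dist (\<phi> (\<tau> q)) (g (\<tau> q)) \<ge> 1)"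
    if "q \<noteq> morse_class x0 g" for q
    unfolding \<tau>_def by (rule someI_ex[OF sep[OF that]])
  define Q' where "Q' = Q - {morse_class x0 g}"
  define Y where "Y = {\<phi>. dist (\<phi> T0) (g T0) < 1} \<inter> \<Inter>((\<lambda>q. {\<phi>. dist (\<phi> (\<tau> q)) (g (\<tau> q)) < 1}) ` Q')"
  have "openin (topology_generated_by COB) Y"
    unfolding Y_def
  proof (rule openin_Int_Inter)
    show "finite ((\<lambda>q. {\<phi>. dist (\<phi> (\<tau> q)) (g (\<tau> q)) < 1}) ` Q')" using Q by (simp add: Q'_def)
    show "openin (topology_generated_by COB) {\<phi>. dist (\<phi> T0) (g T0) < 1}" by (rule open_pt[OF T0])
    fix X assume "X \<in> (\<lambda>q. {\<phi>. dist (\<phi> (\<tau> q)) (g (\<tau> q)) < 1}) ` Q'"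
    then obtain q where "q \<in> Q'" "X = {\<phi>. dist (\<phi> (\<tau> q)) (g (\<tau> q)) < 1}" by blast
    then show "openin (topology_generated_by COB) X" using tau[of q] open_pt by (auto simp: Q'_def)
  qed
  moreover have "g \<in> Y" by (simp add: Y_def)
  moreover have "morse_class x0 \<phi> \<notin> A" if phi: "\<phi> \<in> Y" "\<phi> \<in> NMorse_rays x0 M" for \<phi>
  proof
    assume cA: "morse_class x0 \<phi> \<in> A"
    have "morse_class x0 \<phi> \<in> Morse_boundary_N x0 M" using phi(2) unfolding Morse_boundary_N_def by blast
    then have "morse_class x0 \<phi> \<in> Q \<union> E" using cA AQE by blast
    then show False
    proof
      assume "morse_class x0 \<phi> \<in> E"
      then have "dist (\<phi> T0) (g T0) \<ge> 1" using E phi(2) by blast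
      then show False using phi(1) by (simp add: Y_def)
    next
      assume "morse_class x0 \<phi> \<in> Q"
      moreover have ne: "morse_class x0 \<phi> \<noteq> morse_class x0 g" using cA gA by auto
      ultimately have "morse_class x0 \<phi> \<in> Q'" by (simp add: Q'_def)
      then have "dist (\<phi> (\<tau> (morse_class x0 \<phi>))) (g (\<tau> (morse_class x0 \<phi>))) < 1" using phi(1) by (simp add: Y_def)
      moreover have "dist (\<phi> (\<tau> (morse_class x0 \<phi>))) (g (\<tau> (morse_class x0 \<phi>))) \<ge> 1"
        using tau[OF ne] phi(2) by blast
      ultimately show False by simp
    qed
  qed
  ultimately show ?thesis by blast
qed

lemma dl_open:
  fixes A :: "(real \<Rightarrow> 'a::metric_space) set set"
  assumes H: "\<And>M g. morse_gauge M \<Longrightarrow> g \<in> NMorse_rays x0 M \<Longrightarrow> morse_class x0 g \<notin> A \<Longrightarrow>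
      \<exists>Y. openin (topology_generated_by COB) Y \<and> g \<in> Y \<and> (\<forall>\<phi> \<in> Y \<inter> NMorse_rays x0 M. morse_class x0 \<phi> \<notin> A)"
  shows "openin (Morse_boundary_top x0) (Morse_boundary x0 - A)"
  unfolding openin_MB
proof (intro conjI allI impI)
  show "Morse_boundary x0 - A \<subseteq> Morse_boundary x0" by blast
  fix M :: "real \<Rightarrow> real \<Rightarrow> real" assume M: "morse_gauge M"
  have pre: "{x \<in> NMorse_rays x0 M. morse_class x0 x \<in> (Morse_boundary x0 - A) \<inter> Morse_boundary_N x0 M}
      = {x \<in> NMorse_rays x0 M. morse_class x0 x \<notin> A}"
    using NR_Morse[OF M] unfolding Morse_boundary_def Morse_boundary_N_def by blast
  have "openin (compact_open_on (NMorse_rays x0 M)) {x \<in> NMorse_rays x0 M. morse_class x0 x \<notin> A}"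
  proof (subst openin_subopen, intro ballI)
    fix g assume gin: "g \<in> {x \<in> NMorse_rays x0 M. morse_class x0 x \<notin> A}"
    then obtain Y where Y: "openin (topology_generated_by COB) Y" "g \<in> Y"
      "\<forall>\<phi> \<in> Y \<inter> NMorse_rays x0 M. morse_class x0 \<phi> \<notin> A" using H[OF M] by blast
    have "openin (compact_open_on (NMorse_rays x0 M)) (Y \<inter> NMorse_rays x0 M)"
      unfolding compact_open_on_def openin_subtopology using Y(1) by blast
    then show "\<exists>T. openin (compact_open_on (NMorse_rays x0 M)) T \<and> g \<in> T \<and>
        T \<subseteq> {x \<in> NMorse_rays x0 M. morse_class x0 x \<notin> A}"
      using Y(2,3) gin by (intro exI[of _ "Y \<inter> NMorse_rays x0 M"]) auto
  qed
  then show "openin (Morse_boundary_N_top x0 M) ((Morse_boundary x0 - A) \<inter> Morse_boundary_N x0 M)"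
    unfolding Morse_boundary_N_top_def openin_quot topspace_co pre
    unfolding Morse_boundary_N_def by blast
qed

lemma dl_contra:
  assumes lim: "limitin (Morse_boundary_top x0) pn p sequentially"
    and op: "openin (Morse_boundary_top x0) (Morse_boundary x0 - A)"
    and p: "p \<in> Morse_boundary x0" "p \<notin> A" and freq: "\<And>n0. \<exists>n\<ge>n0. pn n \<in> A"
  shows False
proof -
  have "eventually (\<lambda>n. pn n \<in> Morse_boundary x0 - A) sequentially"
    using limitinD[OF lim op] p by blast
  then obtain n0 where "\<And>n. n \<ge> n0 \<Longrightarrow> pn n \<notin> A" unfolding eventually_sequentially by blast
  then show False using freq[of n0] by blast
qed



theorem lemma5p3:
  fixes x0 :: "'a::metric_space"
    and pn :: "nat \<Rightarrow> (real \<Rightarrow> 'a) set" and p :: "(real \<Rightarrow> 'a) set"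
  assumes "proper_space TYPE('a)" and "geodesic_space TYPE('a)"
    and "\<And>n. pn n \<in> Morse_boundary x0" and "p \<in> Morse_boundary x0"
    and "limitin (Morse_boundary_top x0) pn p sequentially"
  shows "\<exists>N. morse_gauge N \<and> (\<forall>n. pn n \<in> Morse_boundary_N x0 N) \<and> p \<in> Morse_boundary_N x0 N \<and>
           limitin (Morse_boundary_N_top x0 N) pn p sequentially"
proof -
  note proper = assms(1) and geo = assms(2) and lim = assms(5) and pMB = assms(4)
  have rep: "\<exists>g N. g \<in> NMorse_rays x0 N \<and> morse_gauge N \<and> q = morse_class x0 g" if "q \<in> Morse_boundary x0" for q
    using that unfolding Morse_boundary_def Morse_ray_def NMorse_rays_def by blast
  obtain h N0 where h: "h \<in> NMorse_rays x0 N0" "morse_gauge N0" "p = morse_class x0 h"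
    using rep[OF pMB] by blast
  obtain hs Ns where hs: "\<And>n. hs n \<in> NMorse_rays x0 (Ns n)" "\<And>n. morse_gauge (Ns n)" "\<And>n. pn n = morse_class x0 (hs n)"
    using rep[OF assms(3)] by metis
  have hsray: "geodesic_ray x0 (hs n)" for n using hs(1)[of n] unfolding NMorse_rays_def by blast
  have hsM: "Morse_ray x0 (hs n)" for n by (rule NR_Morse[OF hs(2) hs(1)])
  have hray: "geodesic_ray x0 h" "N_Morse_ray N0 h" using h(1) unfolding NMorse_rays_def by auto
  have hM: "Morse_ray x0 h" by (rule NR_Morse[OF h(2) h(1)])
  have pN0: "p \<in> Morse_boundary_N x0 N0" using h unfolding Morse_boundary_N_def by blast
  have pnN: "pn n \<in> Morse_boundary_N x0 (Ns n)" for n using hs unfolding Morse_boundary_N_def by blast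

  have bnd: "\<exists>B. \<forall>n a b c u. quasi_geodesic l e a b c \<longrightarrow> c a \<in> hs n ` {0..} \<longrightarrow> c b \<in> hs n ` {0..}
      \<longrightarrow> u \<in> {a..b} \<longrightarrow> infdist (c u) (hs n ` {0..}) \<le> B" if le: "l \<ge> 1" "e \<ge> 0" for l e
  proof (rule ccontr)
    assume "\<not> ?thesis"
    then have "\<forall>k::nat. \<exists>n a b c u. quasi_geodesic l e a b c \<and> c a \<in> hs n ` {0..} \<and> c b \<in> hs n ` {0..}
      \<and> u \<in> {a..b} \<and> infdist (c u) (hs n ` {0..}) > real k"
      by (metis not_le)
    then obtain nk where nk: "\<And>k. \<exists>a b c u. quasi_geodesic l e a b c \<and> c a \<in> hs (nk k) ` {0..} \<and> c b \<in> hs (nk k) ` {0..}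
      \<and> u \<in> {a..b} \<and> infdist (c u) (hs (nk k) ` {0..}) > real k"
      by metis
    define \<beta> where "\<beta> M = M l (e + 2 * (2 * M 3 0)) + 2 * (2 * M 3 0)" for M :: "real \<Rightarrow> real \<Rightarrow> real"
    have kb: "real k < \<beta> M" if M: "morse_gauge M" "pn (nk k) \<in> Morse_boundary_N x0 M" for M k
    proof -
      obtain \<phi> where phi: "\<phi> \<in> NMorse_rays x0 M" "morse_class x0 \<phi> = pn (nk k)"
        using M(2) unfolding Morse_boundary_N_def by blast
      have close: "dist (\<phi> t) (hs (nk k) t) \<le> 2 * M 3 0" if "t \<ge> 0" for t
        by (rule fellow_class[OF geo phi(1) hsM _ that]) (simp add: phi(2) hs(3))
      have phir: "geodesic_ray x0 \<phi>" "N_Morse_ray M \<phi>" using phi(1) unfolding NMorse_rays_def by auto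
      obtain a b c u where abc: "quasi_geodesic l e a b c" "c a \<in> hs (nk k) ` {0..}" "c b \<in> hs (nk k) ` {0..}"
        "u \<in> {a..b}" "infdist (c u) (hs (nk k) ` {0..}) > real k" using nk[of k] by blast
      have "infdist (c u) (hs (nk k) ` {0..}) \<le> \<beta> M"
        unfolding \<beta>_def by (rule transfer[OF phir hsray close le abc(1-4)])
      then show ?thesis using abc(5) by linarith
    qed
    define A where "A = {pn (nk k) | k. \<beta> N0 < real k}"
    have pA: "p \<notin> A"
    proof
      assume "p \<in> A"
      then obtain k where "p = pn (nk k)" "\<beta> N0 < real k" unfolding A_def by blast
      then show False using kb[OF h(2)] pN0 by fastforce
    qed
    have freq: "\<exists>n\<ge>n0. pn n \<in> A" for n0
    proof -
      define K where "K = Max ({\<beta> N0} \<union> (\<lambda>n. \<beta> (Ns n)) ` {..n0})"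
      have fin: "finite ({\<beta> N0} \<union> (\<lambda>n. \<beta> (Ns n)) ` {..n0})" by simp
      have Kge1: "\<beta> N0 \<le> K" unfolding K_def by (rule Max_ge[OF fin]) simp
      have Kge2: "\<beta> (Ns n) \<le> K" if "n \<le> n0" for n unfolding K_def by (rule Max_ge[OF fin]) (use that in auto)
      note Kge = Kge1 Kge2
      define k where "k = nat \<lceil>K\<rceil> + 1"
      have kK: "K < real k" unfolding k_def by linarith
      have "nk k \<ge> n0"
      proof (rule ccontr)
        assume "\<not> nk k \<ge> n0"
        then have "\<beta> (Ns (nk k)) \<le> K" using Kge(2) by simp
        moreover have "real k < \<beta> (Ns (nk k))" by (rule kb[OF hs(2) pnN])
        ultimately show False using kK by linarith
      qed
      moreover have "pn (nk k) \<in> A" unfolding A_def using Kge(1) kK by force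
      ultimately show ?thesis by blast
    qed
    have op: "openin (Morse_boundary_top x0) (Morse_boundary x0 - A)"
    proof (rule dl_open)
      fix M and g :: "real \<Rightarrow> 'a" assume M: "morse_gauge M" and g: "g \<in> NMorse_rays x0 M" and gA: "morse_class x0 g \<notin> A"
      define Q where "Q = (\<lambda>k. pn (nk k)) ` {..nat \<lceil>\<beta> M\<rceil>}"
      have finQ: "finite Q" unfolding Q_def by simp
      have AQ: "A \<inter> Morse_boundary_N x0 M \<subseteq> Q \<union> {}"
      proof
        fix q assume "q \<in> A \<inter> Morse_boundary_N x0 M"
        then obtain k where k: "q = pn (nk k)" "pn (nk k) \<in> Morse_boundary_N x0 M" unfolding A_def by blast
        then have "real k < \<beta> M" using kb[OF M] by blast
        then have "k \<le> nat \<lceil>\<beta> M\<rceil>" by linarith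
        then show "q \<in> Q \<union> {}" using k unfolding Q_def by blast
      qed
      show "\<exists>Y. openin (topology_generated_by COB) Y \<and> g \<in> Y \<and> (\<forall>\<phi> \<in> Y \<inter> NMorse_rays x0 M. morse_class x0 \<phi> \<notin> A)"
        by (rule closed_crit[OF geo M g gA finQ AQ order_refl]) simp
    qed
    show False by (rule dl_contra[OF lim op pMB pA freq])
  qed
  define Bnd where "Bnd l e = (SOME B. \<forall>n a b c u. quasi_geodesic l e a b c \<longrightarrow> c a \<in> hs n ` {0..} \<longrightarrow> c b \<in> hs n ` {0..}
      \<longrightarrow> u \<in> {a..b} \<longrightarrow> infdist (c u) (hs n ` {0..}) \<le> B)" for l e
  have Bnd: "infdist (c u) (hs n ` {0..}) \<le> Bnd l e"
    if "l \<ge> 1" "e \<ge> 0" "quasi_geodesic l e a b c" "c a \<in> hs n ` {0..}" "c b \<in> hs n ` {0..}" "u \<in> {a..b}"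
    for l e n a b c u
  proof -
    have "\<forall>n a b c u. quasi_geodesic l e a b c \<longrightarrow> c a \<in> hs n ` {0..} \<longrightarrow> c b \<in> hs n ` {0..}
      \<longrightarrow> u \<in> {a..b} \<longrightarrow> infdist (c u) (hs n ` {0..}) \<le> Bnd l e"
      unfolding Bnd_def by (rule someI_ex[OF bnd[OF that(1,2)]])
    then show ?thesis using that by blast
  qed
  define N where "N l e = max (N0 l e) (max 0 (Bnd l (e + 1) + 1))" for l e
  have gauge: "morse_gauge N" unfolding morse_gauge_def N_def by auto
  have hsN: "hs n \<in> NMorse_rays x0 N" for n
    unfolding NMorse_rays_def N_Morse_ray_def
  proof (intro CollectI conjI allI impI ballI)
    show "geodesic_ray x0 (hs n)" by (rule hsray)
    fix l e a b c u assume H: "1 \<le> l" "0 \<le> e" "quasi_geodesic l e a b (c :: real \<Rightarrow> 'a)"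
      "c a \<in> hs n ` {0..}" "c b \<in> hs n ` {0..}" "u \<in> {a..b}"
    have "infdist (c u) (hs n ` {0..}) \<le> Bnd l (e + 1)"
      using Bnd[of l "e+1", OF H(1) _ qg_mono[OF H(3)] H(4-6)] H(2) by simp
    then show "infdist (c u) (hs n ` {0..}) \<le> N l e" unfolding N_def by linarith
  qed
  have hN: "h \<in> NMorse_rays x0 N"
    unfolding NMorse_rays_def N_Morse_ray_def
  proof (intro CollectI conjI allI impI ballI)
    show "geodesic_ray x0 h" by (rule hray(1))
    fix l e a b c u assume H: "1 \<le> l" "0 \<le> e" "quasi_geodesic l e a b (c :: real \<Rightarrow> 'a)"
      "c a \<in> h ` {0..}" "c b \<in> h ` {0..}" "u \<in> {a..b}"
    have "infdist (c u) (h ` {0..}) \<le> N0 l e"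
      using hray(2) H unfolding N_Morse_ray_def by blast
    then show "infdist (c u) (h ` {0..}) \<le> N l e" unfolding N_def by linarith
  qed
  have pnB: "pn n \<in> Morse_boundary_N x0 N" for n
    using hsN hs(3) unfolding Morse_boundary_N_def by blast
  have pB: "p \<in> Morse_boundary_N x0 N"
    using hN h(3) unfolding Morse_boundary_N_def by blast
  have "limitin (Morse_boundary_N_top x0 N) pn p sequentially"
  proof (rule ccontr)
    assume nl: "\<not> ?thesis"
    have "p \<in> topspace (Morse_boundary_N_top x0 N)" using pB topspace_MBN by blast
    then obtain V where V: "openin (Morse_boundary_N_top x0 N) V" "p \<in> V"
      "\<not> eventually (\<lambda>n. pn n \<in> V) sequentially"
      using nl unfolding limitin_def by blast
    obtain r :: "nat \<Rightarrow> nat" where r: "strict_mono r" "\<And>k. pn (r k) \<notin> V"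
      using not_eventually_sequentiallyD[OF V(3)] by blast
    obtain r' f where rf: "strict_mono r'" "\<And>t. (\<lambda>j. hs (r (r' j)) t) \<longlonglongrightarrow> f t"
      using ray_AA[OF proper, of x0 "\<lambda>k. hs (r k)"] hsray by blast
    define m where "m = r \<circ> r'"
    have m: "strict_mono m" unfolding m_def using r(1) rf(1) by (rule strict_mono_o)
    define \<psi> where "\<psi> j = hs (m j)" for j
    have conv: "\<And>t. (\<lambda>j. \<psi> j t) \<longlonglongrightarrow> f t" using rf(2) by (simp add: \<psi>_def m_def)
    have psiray: "geodesic_ray x0 (\<psi> j)" for j by (simp add: \<psi>_def hsray)
    have fray: "geodesic_ray x0 f" by (rule limit_ray[OF psiray conv])
    have fN: "f \<in> NMorse_rays x0 N"
      unfolding NMorse_rays_def N_Morse_ray_def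
    proof (intro CollectI conjI allI impI ballI)
      show "geodesic_ray x0 f" by (rule fray)
      fix l e a b c u assume H: "1 \<le> l" "0 \<le> e" "quasi_geodesic l e a b (c :: real \<Rightarrow> 'a)"
        "c a \<in> f ` {0..}" "c b \<in> f ` {0..}" "u \<in> {a..b}"
      have "infdist (c u) (f ` {0..}) \<le> Bnd l (e + 1) + 1"
      proof (rule limit_morse[OF psiray conv fray _ H(3-6)])
        fix j a' b' c' u' assume "quasi_geodesic l (e + 1) a' b' c'" "c' a' \<in> \<psi> j ` {0..}"
          "c' b' \<in> \<psi> j ` {0..}" "u' \<in> {a'..b'}"
        then show "infdist (c' u') (\<psi> j ` {0..}) \<le> Bnd l (e + 1)"
          unfolding \<psi>_def using Bnd[OF H(1)] H(2) by simp
      qed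
      then show "infdist (c u) (f ` {0..}) \<le> N l e" unfolding N_def by linarith
    qed
    have fM: "Morse_ray x0 f" by (rule NR_Morse[OF gauge fN])
    have psiN: "\<psi> j \<in> NMorse_rays x0 N" for j by (simp add: \<psi>_def hsN)
    have pnm: "pn (m j) = morse_class x0 (\<psi> j)" for j by (simp add: \<psi>_def hs(3))
    show False
    proof (cases "morse_class x0 f = p")
      case True
      define W where "W = {x \<in> topspace (compact_open_on (NMorse_rays x0 N)). morse_class x0 x \<in> V}"
      have Wo: "openin (compact_open_on (NMorse_rays x0 N)) W"
        using V(1) unfolding W_def Morse_boundary_N_top_def openin_quot by blast
      have fW: "f \<in> W" unfolding W_def topspace_co using fN True V(2) by simp
      have "limitin (compact_open_on (NMorse_rays x0 N)) \<psi> f sequentially"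
        by (rule co_limit[OF psiN fN ray_lip[OF psiray] ray_lip[OF fray] conv])
      then have "eventually (\<lambda>j. \<psi> j \<in> W) sequentially" by (rule limitinD[OF _ Wo fW])
      then obtain j where "\<psi> j \<in> W" unfolding eventually_sequentially by blast
      then have "pn (m j) \<in> V" unfolding W_def pnm by simp
      then show False using r(2)[of "r' j"] by (simp add: m_def)
    next
      case False
      have freq2: "\<exists>j\<ge>j0. pn (m j) \<noteq> p" for j0
      proof (rule ccontr)
        assume "\<not> ?thesis"
        then have eqp: "\<And>j. j \<ge> j0 \<Longrightarrow> pn (m j) = p" by blast
        have "dist (h t) (f t) \<le> 2 * N0 3 0" if t: "t \<ge> 0" for t
        proof (rule tendsto_upperbound)
          show "(\<lambda>j. dist (h t) (\<psi> j t)) \<longlonglongrightarrow> dist (h t) (f t)" by (intro tendsto_intros conv)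
          show "eventually (\<lambda>j. dist (h t) (\<psi> j t) \<le> 2 * N0 3 0) sequentially"
            unfolding eventually_sequentially
          proof (intro exI allI impI)
            fix j assume "j0 \<le> j"
            then have "morse_class x0 h = morse_class x0 (\<psi> j)" using eqp[of j] h(3) pnm[of j] by simp
            then show "dist (h t) (\<psi> j t) \<le> 2 * N0 3 0"
              by (rule fellow_class[OF geo h(1) NR_Morse[OF gauge psiN] _ t])
          qed
        qed simp
        then have "fin_hausdorff h f" by (rule fh_bound)
        then have "morse_class x0 f = p" using class_eq h(3) by metis
        then show False using False by simp
      qed
      define A where "A = {morse_class x0 f} \<union> {pn (m j) | j. pn (m j) \<noteq> p}"
      have pA: "p \<notin> A" unfolding A_def using False by auto
      have freq: "\<exists>n\<ge>n0. pn n \<in> A" for n0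
      proof -
        obtain j where "j \<ge> n0" "pn (m j) \<noteq> p" using freq2 by blast
        moreover have "m j \<ge> j" using seq_suble[OF m] by simp
        ultimately show ?thesis unfolding A_def by (intro exI[of _ "m j"]) auto
      qed
      have op: "openin (Morse_boundary_top x0) (Morse_boundary x0 - A)"
      proof (rule dl_open)
        fix M and g :: "real \<Rightarrow> 'a" assume M: "morse_gauge M" and g: "g \<in> NMorse_rays x0 M"
          and gA: "morse_class x0 g \<notin> A"
        define C where "C = 2 * M 3 0"
        have gf: "morse_class x0 g \<noteq> morse_class x0 f" using gA unfolding A_def by auto
        have "\<exists>T0\<ge>0. dist (g T0) (f T0) > C + 2"
        proof (rule ccontr)
          assume "\<not> ?thesis"
          then have "\<And>t. t \<ge> 0 \<Longrightarrow> dist (g t) (f t) \<le> C + 2" by (simp add: not_less)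
          then have "fin_hausdorff g f" by (rule fh_bound)
          then show False using class_eq gf by metis
        qed
        then obtain T0 where T0: "T0 \<ge> 0" "dist (g T0) (f T0) > C + 2" by blast
        obtain J where J: "\<And>j. j \<ge> J \<Longrightarrow> dist (\<psi> j T0) (f T0) < 1"
          using tendstoD[OF conv[of T0], of 1] unfolding eventually_sequentially by auto
        define Q where "Q = (\<lambda>j. pn (m j)) ` {..<J}"
        define E where "E = {morse_class x0 f} \<union> {pn (m j) | j. j \<ge> J}"
        have finQ: "finite Q" unfolding Q_def by simp
        have AQE: "A \<inter> Morse_boundary_N x0 M \<subseteq> Q \<union> E"
          unfolding A_def Q_def E_def by (auto simp: not_le)
        have Ecnd: "dist (\<phi> T0) (g T0) \<ge> 1" if phi: "\<phi> \<in> NMorse_rays x0 M" "morse_class x0 \<phi> \<in> E" for \<phi>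
        proof -
          have "dist (\<phi> T0) (f T0) \<le> C + 1"
          proof (cases "morse_class x0 \<phi> = morse_class x0 f")
            case True
            have "dist (\<phi> T0) (f T0) \<le> C" unfolding C_def
              by (rule fellow_class[OF geo phi(1) fM True T0(1)])
            then show ?thesis by simp
          next
            case False
            then obtain j where j: "j \<ge> J" "morse_class x0 \<phi> = pn (m j)" using phi(2) unfolding E_def by auto
            have "dist (\<phi> T0) (\<psi> j T0) \<le> C" unfolding C_def
              by (rule fellow_class[OF geo phi(1) NR_Morse[OF gauge psiN] _ T0(1)]) (simp add: j(2) pnm)
            moreover have "dist (\<phi> T0) (f T0) \<le> dist (\<phi> T0) (\<psi> j T0) + dist (\<psi> j T0) (f T0)"
              by (rule dist_triangle)
            ultimately show ?thesis using J[OF j(1)] by simp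
          qed
          moreover have "dist (g T0) (f T0) \<le> dist (g T0) (\<phi> T0) + dist (\<phi> T0) (f T0)" by (rule dist_triangle)
          ultimately show ?thesis using T0(2) by (simp add: dist_commute)
        qed
        show "\<exists>Y. openin (topology_generated_by COB) Y \<and> g \<in> Y \<and> (\<forall>\<phi> \<in> Y \<inter> NMorse_rays x0 M. morse_class x0 \<phi> \<notin> A)"
          by (rule closed_crit[OF geo M g gA finQ AQE T0(1)]) (rule Ecnd; assumption)
      qed
      show False by (rule dl_contra[OF lim op pMB pA freq])
    qed
  qed
  then show ?thesis using gauge pnB pB by blast
qed

end
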